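(* Let $G=(V,E)$ be a graph, and let $\varepsilon>0$ satisfy $2\varepsilon|E|<1$. Construct the following instance of \textsc{HET-EF1}: the goods are the vertices $V$; there is an agent $0$ with $v_0(u)=1$ for every $u\in V$, and for each edge $e=(u_j,u_k)\in E$ an agent $e$ with $v_e(u_j)=v_e(u_k)=\varepsilon$ and $v_e(u)=0$ for $u\notin\{u_j,u_k\}$. Then for every integer $t\ge0$, the maximum independent set of $G$ has size $t$ if and only if the optimal value $\mathrm{OPT}$ of the constructed instance satisfies $t\le\mathrm{OPT}<t+1$.
   Context: \textsc{HET-EF1}: given agents with additive (possibly different) valuations $v_i:2^{[m]}\to\mathbb{R}_{\ge0}$ over a set of $m$ goods, maximize $\sum_i v_i(S_i)$ over all allocations (ordered partitions of the goods, parts may be empty) $(S_i)_i$ that are $\mathrm{EF1}$: for all agents $i,j$ with $S_j\ne\emptyset$ there is $g\in S_j$ with $v_i(S_i)\ge v_i(S_j)-v_i(g)$. Valuations are additive: $v_i(S)=\sum_{g\in S}v_i(g)$. *)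

theory Defs
  imports Complex_Main
begin

definition bval :: "('g \<Rightarrow> real) \<Rightarrow> 'g set \<Rightarrow> real" where
  "bval w S = (\<Sum>g\<in>S. w g)"

definition is_allocation :: "'a set \<Rightarrow> 'g set \<Rightarrow> ('a \<Rightarrow> 'g set) \<Rightarrow> bool" where
  "is_allocation N M A \<longleftrightarrow>
     (\<forall>i\<in>N. A i \<subseteq> M) \<and> (\<forall>i\<in>N. \<forall>j\<in>N. i \<noteq> j \<longrightarrow> A i \<inter> A j = {}) \<and>
     (\<Union>i\<in>N. A i) = M \<and> (\<forall>i. i \<notin> N \<longrightarrow> A i = {})"

definition is_EF1 :: "'a set \<Rightarrow> ('a \<Rightarrow> 'g \<Rightarrow> real) \<Rightarrow> ('a \<Rightarrow> 'g set) \<Rightarrow> bool" where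
  "is_EF1 N v A \<longleftrightarrow>
     (\<forall>i\<in>N. \<forall>j\<in>N. A j \<noteq> {} \<longrightarrow>
        (\<exists>g\<in>A j. bval (v i) (A i) \<ge> bval (v i) (A j) - v i g))"

definition welfare :: "'a set \<Rightarrow> ('a \<Rightarrow> 'g \<Rightarrow> real) \<Rightarrow> ('a \<Rightarrow> 'g set) \<Rightarrow> real" where
  "welfare N v A = (\<Sum>i\<in>N. bval (v i) (A i))"

definition het_ef1_opt :: "'a set \<Rightarrow> 'g set \<Rightarrow> ('a \<Rightarrow> 'g \<Rightarrow> real) \<Rightarrow> real" where
  "het_ef1_opt N M v =
     Max {welfare N v A | A. is_allocation N M A \<and> is_EF1 N v A}"

text \<open>Independent sets and the independence number of a graph (V,E),
  edges being 2-element subsets of V.\<close>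
definition indep_set :: "'v set \<Rightarrow> 'v set set \<Rightarrow> 'v set \<Rightarrow> bool" where
  "indep_set V E S \<longleftrightarrow> S \<subseteq> V \<and> (\<forall>e\<in>E. \<not> e \<subseteq> S)"

definition max_indep_size :: "'v set \<Rightarrow> 'v set set \<Rightarrow> nat" where
  "max_indep_size V E = Max {card S | S. indep_set V E S}"

text \<open>The reduction: agent None is agent 0, agent Some e is the edge agent e.\<close>
definition red_agents :: "'v set set \<Rightarrow> 'v set option set" where
  "red_agents E = insert None (Some ` E)"

definition red_val :: "real \<Rightarrow> 'v set option \<Rightarrow> 'v \<Rightarrow> real" where
  "red_val \<epsilon> i u = (case i of None \<Rightarrow> 1 | Some e \<Rightarrow> (if u \<in> e then \<epsilon> else 0))"

end

theory Submission
  imports Defs "HOL-Library.FuncSet"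
begin

lemma bval_none: "bval (red_val \<epsilon> None) X = real (card X)"
  by (simp add: bval_def red_val_def)
lemma bval_some: "finite X \<Longrightarrow> bval (red_val \<epsilon> (Some e)) X = \<epsilon> * real (card (X \<inter> e))"
  by (simp add: bval_def red_val_def sum.If_cases Int_def)
lemma card_le1: "finite e \<Longrightarrow> card e = 2 \<Longrightarrow> \<not> e \<subseteq> X \<Longrightarrow> card (X \<inter> e) \<le> 1"
proof -
  assume a: "finite e" "card e = 2" "\<not> e \<subseteq> X"
  have "X \<inter> e \<subset> e" using a by blast
  from psubset_card_mono[OF a(1) this] a show ?thesis by simp
qed
lemma rv_nonneg: "\<epsilon> > 0 \<Longrightarrow> red_val \<epsilon> i u \<ge> 0"
  by (simp add: red_val_def split: option.split)

lemma bval_nonneg: "\<epsilon> > 0 \<Longrightarrow> bval (red_val \<epsilon> i) X \<ge> 0"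
  unfolding bval_def by (simp add: rv_nonneg sum_nonneg)

lemma key:
  fixes V :: "'v set" and E :: "'v set set" and \<epsilon> :: real
  assumes fV: "finite V"
    and EV: "\<forall>e\<in>E. e \<subseteq> V \<and> card e = 2"
    and ep: "\<epsilon> > 0"
    and sm: "2 * \<epsilon> * real (card E) < 1"
  shows "real (max_indep_size V E) \<le> het_ef1_opt (red_agents E) V (red_val \<epsilon>) \<and>
         het_ef1_opt (red_agents E) V (red_val \<epsilon>) < real (max_indep_size V E) + 1"
proof -
  define N where "N = red_agents E"
  define v where "v = (red_val \<epsilon> :: 'v set option \<Rightarrow> 'v \<Rightarrow> real)"
  define \<alpha> where "\<alpha> = max_indep_size V E"
  define W where "W = {welfare N v A | A. is_allocation N V A \<and> is_EF1 N v A}"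
  have "E \<subseteq> Pow V" using EV by auto
  hence fE: "finite E" using fV finite_subset by (metis finite_Pow_iff)
  have fe: "\<And>e. e \<in> E \<Longrightarrow> finite e" using EV fV finite_subset by blast
  have fN: "finite N" using fE by (simp add: N_def red_agents_def)
  have IS_fin: "finite {card S | S. indep_set V E S}"
  proof -
    have "{card S | S. indep_set V E S} \<subseteq> card ` Pow V" by (auto simp: indep_set_def)
    thus ?thesis using fV finite_subset by blast
  qed
  have "indep_set V E {}" unfolding indep_set_def
  proof (intro conjI ballI)
    fix e assume "e \<in> E"
    hence "card e = 2" using EV by blast
    thus "\<not> e \<subseteq> {}" by auto
  qed simp
  hence IS_ne: "{card S | S. indep_set V E S} \<noteq> {}" by blast
  have alpha_ge: "\<And>S. indep_set V E S \<Longrightarrow> card S \<le> \<alpha>"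
    unfolding \<alpha>_def max_indep_size_def using IS_fin by (auto intro: Max_ge)
  obtain S where S: "indep_set V E S" "card S = \<alpha>"
    using Max_in[OF IS_fin IS_ne] unfolding \<alpha>_def max_indep_size_def by auto
  have SV: "S \<subseteq> V" using S(1) unfolding indep_set_def by blast
  have W_fin: "finite W"
  proof -
    have "W \<subseteq> (\<lambda>B. welfare N v B) ` (PiE N (\<lambda>_. Pow V))"
    proof
      fix w assume "w \<in> W"
      then obtain A where A: "w = welfare N v A" "is_allocation N V A" unfolding W_def by auto
      have "\<forall>i\<in>N. A i \<subseteq> V" using A(2) unfolding is_allocation_def by blast
      hence "restrict A N \<in> PiE N (\<lambda>_. Pow V)" by (simp add: restrict_PiE_iff)
      moreover have "welfare N v (restrict A N) = w"
        unfolding A welfare_def by (rule sum.cong) auto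
      ultimately show "w \<in> (\<lambda>B. welfare N v B) ` (PiE N (\<lambda>_. Pow V))" by force
    qed
    moreover have "finite (PiE N (\<lambda>_. Pow V))" using fN fV by (simp add: finite_PiE)
    ultimately show ?thesis using finite_subset by blast
  qed
  have wsplit: "\<And>A. welfare N v A = real (card (A None)) + (\<Sum>e\<in>E. bval (v (Some e)) (A (Some e)))"
    unfolding welfare_def N_def red_agents_def v_def
    using fE by (subst sum.insert) (auto simp: sum.reindex bval_none)
  have upper: "\<And>w. w \<in> W \<Longrightarrow> w < real \<alpha> + 1"
  proof -
    fix w assume "w \<in> W"
    then obtain A where A: "w = welfare N v A" "is_allocation N V A" "is_EF1 N v A"
      unfolding W_def by auto
    have NoneN: "None \<in> N" and SomeN: "\<And>e. e \<in> E \<Longrightarrow> Some e \<in> N"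
      by (auto simp: N_def red_agents_def)
    have sub: "\<And>i. i \<in> N \<Longrightarrow> A i \<subseteq> V" using A(2) by (auto simp: is_allocation_def)
    have dis: "\<And>e. e \<in> E \<Longrightarrow> A (Some e) \<inter> A None = {}"
      using A(2) NoneN SomeN unfolding is_allocation_def by blast
    have ind: "indep_set V E (A None)"
      unfolding indep_set_def
    proof (intro conjI ballI)
      show "A None \<subseteq> V" using sub NoneN by blast
    next
      fix e assume eE: "e \<in> E"
      show "\<not> e \<subseteq> A None"
      proof
        assume es: "e \<subseteq> A None"
        have "e \<noteq> {}" using EV eE by (metis card.empty zero_neq_numeral)
        hence ne: "A None \<noteq> {}" using es by blast
        obtain g where g: "g \<in> A None"
          "bval (v (Some e)) (A (Some e)) \<ge> bval (v (Some e)) (A None) - v (Some e) g"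
          using A(3) ne NoneN SomeN[OF eE] unfolding is_EF1_def by blast
        have fA: "finite (A None)" "finite (A (Some e))"
          using sub NoneN SomeN[OF eE] fV finite_subset by blast+
        have "A (Some e) \<inter> e = {}" using dis[OF eE] es by blast
        hence z: "bval (v (Some e)) (A (Some e)) = 0" using fA by (simp add: v_def bval_some)
        have "A None \<inter> e = e" using es by blast
        hence t: "bval (v (Some e)) (A None) = 2 * \<epsilon>" using fA EV eE by (simp add: v_def bval_some)
        have "v (Some e) g \<le> \<epsilon>" using ep by (simp add: v_def red_val_def)
        thus False using g z t ep by linarith
      qed
    qed
    have c1: "card (A None) \<le> \<alpha>" using alpha_ge[OF ind] .
    have c2: "(\<Sum>e\<in>E. bval (v (Some e)) (A (Some e))) \<le> real (card E) * (2 * \<epsilon>)"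
    proof (rule sum_bounded_above)
      fix e assume eE: "e \<in> E"
      have fA: "finite (A (Some e))" using sub SomeN[OF eE] fV finite_subset by blast
      have "card (A (Some e) \<inter> e) \<le> card e" using fe[OF eE] by (simp add: card_mono)
      hence "card (A (Some e) \<inter> e) \<le> 2" using EV eE by simp
      hence "\<epsilon> * real (card (A (Some e) \<inter> e)) \<le> \<epsilon> * 2" using ep by simp
      thus "bval (v (Some e)) (A (Some e)) \<le> 2 * \<epsilon>" using fA by (simp add: v_def bval_some)
    qed
    have c1': "real (card (A None)) \<le> real \<alpha>" using c1 by simp
    have "real (card E) * (2 * \<epsilon>) < 1" using sm by (simp add: algebra_simps)
    thus "w < real \<alpha> + 1" using A(1) wsplit[of A] c1' c2 by linarith
  qed
  define c where "c = (\<lambda>u. SOME e. e \<in> E \<and> u \<in> e)"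
  have cP: "\<And>u. u \<in> V - S \<Longrightarrow> c u \<in> E \<and> u \<in> c u"
  proof -
    fix u assume u: "u \<in> V - S"
    have "\<not> indep_set V E (insert u S)"
    proof
      assume "indep_set V E (insert u S)"
      from alpha_ge[OF this] have "card (insert u S) \<le> \<alpha>" .
      moreover have "card (insert u S) = \<alpha> + 1" using u S(2) SV fV finite_subset by fastforce
      ultimately show False by simp
    qed
    then obtain e where "e \<in> E" "e \<subseteq> insert u S" using u SV unfolding indep_set_def by blast
    moreover have "\<not> e \<subseteq> S" using S(1) \<open>e \<in> E\<close> unfolding indep_set_def by blast
    ultimately have "\<exists>e. e \<in> E \<and> u \<in> e" by blast
    thus "c u \<in> E \<and> u \<in> c u" unfolding c_def by (rule someI_ex)
  qed
  define A where "A = (\<lambda>i. case i of None \<Rightarrow> S | Some e \<Rightarrow> if e \<in> E then {u \<in> V - S. c u = e} else {})"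
  have Asub: "\<And>e. A (Some e) \<subseteq> e" using cP unfolding A_def by auto
  have Afin: "\<And>i. finite (A i)" using fV SV finite_subset unfolding A_def
    by (auto split: option.split)
  have alloc: "is_allocation N V A"
    unfolding is_allocation_def
  proof (intro conjI)
    show "\<forall>i\<in>N. A i \<subseteq> V" using SV by (auto simp: A_def N_def red_agents_def)
    show "\<forall>i\<in>N. \<forall>j\<in>N. i \<noteq> j \<longrightarrow> A i \<inter> A j = {}"
      by (auto simp: A_def N_def red_agents_def)
    show "(\<Union>i\<in>N. A i) = V"
    proof
      show "(\<Union>i\<in>N. A i) \<subseteq> V" using SV by (auto simp: A_def N_def red_agents_def)
      show "V \<subseteq> (\<Union>i\<in>N. A i)"
      proof
        fix u assume u: "u \<in> V"
        show "u \<in> (\<Union>i\<in>N. A i)"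
        proof (cases "u \<in> S")
          case True thus ?thesis by (auto simp: A_def N_def red_agents_def)
        next
          case False
          hence "c u \<in> E" using cP u by blast
          hence "Some (c u) \<in> N" "u \<in> A (Some (c u))" using u False
            by (auto simp: A_def N_def red_agents_def)
          thus ?thesis by blast
        qed
      qed
    qed
    show "\<forall>i. i \<notin> N \<longrightarrow> A i = {}"
    proof (intro allI impI)
      fix i assume "i \<notin> N"
      then obtain e where "i = Some e" "e \<notin> E" by (auto simp: N_def red_agents_def)
      thus "A i = {}" by (simp add: A_def)
    qed
  qed
  have alpha1: "A j \<noteq> {} \<Longrightarrow> \<alpha> \<ge> 1" for j
  proof -
    assume "A j \<noteq> {}"
    then obtain u where "u \<in> A j" by blast
    hence "u \<in> V" using SV by (cases j) (auto simp: A_def split: if_splits)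
    have "indep_set V E {u}" unfolding indep_set_def
    proof (intro conjI ballI)
      fix e assume eE: "e \<in> E"
      show "\<not> e \<subseteq> {u}"
      proof
        assume "e \<subseteq> {u}"
        hence "card e \<le> card {u}" by (intro card_mono) auto
        thus False using EV eE by simp
      qed
    qed (use \<open>u \<in> V\<close> in simp)
    from alpha_ge[OF this] show ?thesis by simp
  qed
  have ef1: "is_EF1 N v A"
    unfolding is_EF1_def
  proof (intro ballI impI)
    fix i j assume iN: "i \<in> N" and jN: "j \<in> N" and ne: "A j \<noteq> {}"
    show "\<exists>g\<in>A j. bval (v i) (A i) \<ge> bval (v i) (A j) - v i g"
    proof (cases "i = j")
      case True
      then obtain g where "g \<in> A j" using ne by blast
      moreover have "v i g \<ge> 0" using ep by (simp add: v_def rv_nonneg)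
      ultimately show ?thesis using True by force
    next
      case ij: False
      show ?thesis
      proof (cases i)
        case None
        then obtain f where jf: "j = Some f" using ij by (cases j) auto
        obtain g where g: "g \<in> A j" using ne by blast
        have fE': "f \<in> E" using jN jf by (auto simp: N_def red_agents_def)
        have "card (A j) \<le> card f" using Asub[of f] jf by (intro card_mono fe[OF fE']) auto
        moreover note fE' 
        ultimately have "card (A j) \<le> 2" using EV by simp
        hence "real (card (A j)) \<le> real \<alpha> + 1" using alpha1[OF ne] by simp
        moreover have "A None = S" by (simp add: A_def)
        ultimately show ?thesis using g None S(2) by (auto simp: v_def bval_none red_val_def)
      next
        case (Some e)
        have eE: "e \<in> E" using iN Some by (auto simp: N_def red_agents_def)
        have ge: "bval (v i) (A i) \<ge> 0" using ep by (simp add: v_def bval_nonneg)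
        have nsub: "\<not> e \<subseteq> A j"
        proof (cases j)
          case None
          thus ?thesis using S(1) eE by (auto simp: A_def indep_set_def)
        next
          case (Some f)
          hence "e \<noteq> f" using ij \<open>i = Some e\<close> by auto
          show ?thesis
          proof
            assume "e \<subseteq> A j"
            hence ef: "e \<subseteq> f" using Asub Some by blast
            hence "f \<in> E" using Some ne by (auto simp: A_def split: if_splits)
            hence "e = f" using card_subset_eq[OF fe ef] EV eE by simp
            thus False using \<open>e \<noteq> f\<close> by simp
          qed
        qed
        have cl: "card (A j \<inter> e) \<le> 1" using card_le1[OF fe[OF eE] _ nsub] EV eE by simp
        show ?thesis
        proof (cases "A j \<inter> e = {}")
          case True
          obtain g where "g \<in> A j" using ne by blast
          moreover have "bval (v i) (A j) = 0" using True Some Afin by (simp add: v_def bval_some)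
          moreover have "v i g \<ge> 0" using ep by (simp add: v_def rv_nonneg)
          ultimately show ?thesis using ge by force
        next
          case False
          then obtain g where g: "g \<in> A j" "g \<in> e" by blast
          have "bval (v i) (A j) \<le> \<epsilon>" using cl Some Afin ep by (simp add: v_def bval_some)
          moreover have "v i g = \<epsilon>" using g Some by (simp add: v_def red_val_def)
          ultimately show ?thesis using ge g by force
        qed
      qed
    qed
  qed
  have wA: "welfare N v A \<in> W" using alloc ef1 unfolding W_def by blast
  have wAge: "welfare N v A \<ge> real \<alpha>"
  proof -
    have "(\<Sum>e\<in>E. bval (v (Some e)) (A (Some e))) \<ge> 0"
      using ep by (simp add: v_def bval_nonneg sum_nonneg)
    thus ?thesis using wsplit[of A] S(2) by (simp add: A_def)
  qed
  have opt: "het_ef1_opt (red_agents E) V (red_val \<epsilon>) = Max W"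
    unfolding het_ef1_opt_def W_def N_def v_def ..
  have "Max W \<ge> real \<alpha>" using Max_ge[OF W_fin wA] wAge by linarith
  moreover have "Max W < real \<alpha> + 1" using upper Max_in[OF W_fin] wA by blast
  ultimately show ?thesis using opt \<alpha>_def by simp
qed

theorem lemmaA3:
  fixes V :: "'v set" and E :: "'v set set" and \<epsilon> :: real and t :: nat
  assumes "finite V"
    and "\<forall>e\<in>E. e \<subseteq> V \<and> card e = 2"
    and "\<epsilon> > 0"
    and "2 * \<epsilon> * real (card E) < 1"
  shows "max_indep_size V E = t \<longleftrightarrow>
           (real t \<le> het_ef1_opt (red_agents E) V (red_val \<epsilon>) \<and>
            het_ef1_opt (red_agents E) V (red_val \<epsilon>) < real t + 1)"
proof -
  note k = key[OF assms]
  define a where "a = max_indep_size V E"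
  define Opt where "Opt = het_ef1_opt (red_agents E) V (red_val \<epsilon>)"
  have "a = t \<longleftrightarrow> (real t \<le> Opt \<and> Opt < real t + 1)"
  proof
    assume "a = t" thus "real t \<le> Opt \<and> Opt < real t + 1" using k a_def Opt_def by simp
  next
    assume h: "real t \<le> Opt \<and> Opt < real t + 1"
    have "real t < real a + 1" "real a < real t + 1" using h k a_def Opt_def by linarith+
    thus "a = t" by linarith
  qed
  thus ?thesis using a_def Opt_def by simp
qed

end
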